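(* Let $p$ be a prime, $n\ge2$, and $\Gamma$ a profinite group acting trivially on $\mathbb{F}_p$. If every open subgroup of $\Gamma$ satisfies the $n$-fold vanishing Massey product property, then every closed subgroup of $\Gamma$ satisfies the $n$-fold vanishing Massey product property.
   Context: With $U_{n+1}(\mathbb{F}_p)$ the upper unitriangular $(n+1)\times(n+1)$ matrices over $\mathbb{F}_p$ and $\overline{U_{n+1}(\mathbb{F}_p)}$ its quotient by the central subgroup given by the $(1,n+1)$ entry, a profinite group $H$ satisfies the $n$-fold vanishing Massey product property if for every continuous homomorphism $\varphi:H\to\overline{U_{n+1}(\mathbb{F}_p)}$ there is a continuous homomorphism $\psi:H\to U_{n+1}(\mathbb{F}_p)$ whose $(i,i+1)$ entries agree with those of $\varphi$ at every $h\in H$, for $1\le i\le n$. *)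

theory Defs
  imports "HOL-Analysis.Analysis" "HOL-Algebra.Algebra"
begin

definition topological_group :: "'a monoid \<Rightarrow> 'a topology \<Rightarrow> bool" where
  "topological_group G T \<longleftrightarrow> group G \<and> topspace T = carrier G \<and>
     continuous_map (prod_topology T T) T (\<lambda>(x, y). x \<otimes>\<^bsub>G\<^esub> y) \<and>
     continuous_map T T (\<lambda>x. inv\<^bsub>G\<^esub> x)"

definition totally_disconnected_space :: "'a topology \<Rightarrow> bool" where
  "totally_disconnected_space T \<longleftrightarrow>
     (\<forall>S. connectedin T S \<longrightarrow> (\<exists>x. S \<subseteq> {x}))"

definition profinite_group :: "'a monoid \<Rightarrow> 'a topology \<Rightarrow> bool" where
  "profinite_group G T \<longleftrightarrow> topological_group G T \<and> compact_space T \<and>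
     Hausdorff_space T \<and> totally_disconnected_space T"

text \<open>Matrices are functions nat \<Rightarrow> nat \<Rightarrow> int, indices 1..n+1, entries in {0..p-1}
  representing F_p; entries outside the index range are 0.\<close>
definition unitri_carrier :: "nat \<Rightarrow> nat \<Rightarrow> (nat \<Rightarrow> nat \<Rightarrow> int) set" where
  "unitri_carrier p n = {M. (\<forall>i j. M i j \<in> {0..<int p}) \<and>
      (\<forall>i j. \<not> (i \<in> {1..n+1} \<and> j \<in> {1..n+1}) \<longrightarrow> M i j = 0) \<and>
      (\<forall>i\<in>{1..n+1}. M i i = 1) \<and>
      (\<forall>i j. j < i \<longrightarrow> M i j = 0)}"

definition unitri_group :: "nat \<Rightarrow> nat \<Rightarrow> (nat \<Rightarrow> nat \<Rightarrow> int) monoid" where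
  "unitri_group p n = \<lparr> carrier = unitri_carrier p n,
     mult = (\<lambda>A B i j. if i \<in> {1..n+1} \<and> j \<in> {1..n+1}
                        then (\<Sum>k=1..n+1. A i k * B k j) mod int p else 0),
     one = (\<lambda>i j. if i \<in> {1..n+1} \<and> i = j then 1 else 0) \<rparr>"

definition corner_subgroup :: "nat \<Rightarrow> nat \<Rightarrow> (nat \<Rightarrow> nat \<Rightarrow> int) set" where
  "corner_subgroup p n = {M \<in> unitri_carrier p n.
      \<forall>i j. i < j \<and> (i, j) \<noteq> (1, n+1) \<longrightarrow> M i j = 0}"

definition unitri_bar :: "nat \<Rightarrow> nat \<Rightarrow> (nat \<Rightarrow> nat \<Rightarrow> int) set monoid" where
  "unitri_bar p n = unitri_group p n Mod corner_subgroup p n"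

text \<open>Finite groups carry the discrete topology. The (i,i+1) entries of a coset are
  those of any of its members (well defined).\<close>
definition massey_vanishing :: "nat \<Rightarrow> nat \<Rightarrow> 'a monoid \<Rightarrow> 'a topology \<Rightarrow> bool" where
  "massey_vanishing p n H TH \<longleftrightarrow>
    (\<forall>\<phi>. \<phi> \<in> hom H (unitri_bar p n) \<and>
         continuous_map TH (discrete_topology (carrier (unitri_bar p n))) \<phi> \<longrightarrow>
      (\<exists>\<psi>. \<psi> \<in> hom H (unitri_group p n) \<and>
         continuous_map TH (discrete_topology (carrier (unitri_group p n))) \<psi> \<and>
         (\<forall>h\<in>carrier H. \<forall>M\<in>\<phi> h. \<forall>i\<in>{1..n}. M i (Suc i) = \<psi> h i (Suc i))))"

end

theory Submission
  imports Defs
begin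

lemma (in group) inv_cancel_left [simp]:
  "x \<in> carrier G \<Longrightarrow> y \<in> carrier G \<Longrightarrow> inv x \<otimes> (x \<otimes> y) = y"
  by (simp add: m_assoc[symmetric])

lemma (in group) inv_cancel_left2 [simp]:
  "x \<in> carrier G \<Longrightarrow> y \<in> carrier G \<Longrightarrow> x \<otimes> (inv x \<otimes> y) = y"
  by (simp add: m_assoc[symmetric])

lemma tg_group: "topological_group G T \<Longrightarrow> group G"
  by (simp add: topological_group_def)

lemma tg_top: "topological_group G T \<Longrightarrow> topspace T = carrier G"
  by (simp add: topological_group_def)

lemma tg_mult_cont:
  assumes "topological_group G T" "continuous_map T T f" "continuous_map T T g"
  shows "continuous_map T T (\<lambda>x. f x \<otimes>\<^bsub>G\<^esub> g x)"
proof -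
  have m: "continuous_map (prod_topology T T) T (\<lambda>(x, y). x \<otimes>\<^bsub>G\<^esub> y)"
    using assms(1) by (simp add: topological_group_def)
  have "continuous_map T T ((\<lambda>(x, y). x \<otimes>\<^bsub>G\<^esub> y) \<circ> (\<lambda>x. (f x, g x)))"
    by (rule continuous_map_compose[OF continuous_map_pairedI[OF assms(2,3)] m])
  then show ?thesis by (simp add: o_def)
qed

lemma tg_inv_cont:
  assumes "topological_group G T" "continuous_map T T f"
  shows "continuous_map T T (\<lambda>x. inv\<^bsub>G\<^esub> f x)"
proof -
  have m: "continuous_map T T (\<lambda>x. inv\<^bsub>G\<^esub> x)"
    using assms(1) by (simp add: topological_group_def)
  show ?thesis using continuous_map_compose[OF assms(2) m] by (simp add: o_def)
qed

lemma tg_const_cont: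
  assumes "topological_group G T" "a \<in> carrier G"
  shows "continuous_map T T (\<lambda>x. a)"
  using assms by (simp add: tg_top)

lemma tg_id_cont: "continuous_map T T (\<lambda>x. x)"
  using continuous_map_id by (simp add: id_def)

lemma tg_open_pre:
  assumes "topological_group G T" "continuous_map T T f" "openin T U"
  shows "openin T {x \<in> carrier G. f x \<in> U}"
  using openin_continuous_map_preimage[OF assms(2,3)] assms(1) by (simp add: tg_top)


lemma profinite_clopen:
  assumes "profinite_group G T" "openin T Op" "x \<in> Op"
  shows "\<exists>W. openin T W \<and> closedin T W \<and> x \<in> W \<and> W \<subseteq> Op"
proof -
  have cs: "compact_space T" and hs: "Hausdorff_space T" and td: "totally_disconnected_space T"
    using assms(1) by (auto simp: profinite_group_def)
  have xt: "x \<in> topspace T" using assms openin_subset by blast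
  have "separated_between T {x} (topspace T - Op)"
  proof (rule cut_wire_fence_theorem[OF cs hs])
    show "closedin T {x}" using hs xt by (simp add: closedin_Hausdorff_singleton)
    show "closedin T (topspace T - Op)" using assms(2) by blast
    fix C assume "connectedin T C"
    then obtain y where "C \<subseteq> {y}" using td unfolding totally_disconnected_space_def by blast
    then show "disjnt C {x} \<or> disjnt C (topspace T - Op)"
      using assms(3) by (auto simp: disjnt_def)
  qed
  then obtain U V where "openin T U" "openin T V" "U \<union> V = topspace T" "disjnt U V"
      "{x} \<subseteq> U" "topspace T - Op \<subseteq> V"
    unfolding separated_between_def by blast
  moreover have "closedin T U"
  proof -
    have "U = topspace T - V" using \<open>U \<union> V = topspace T\<close> \<open>disjnt U V\<close> by (auto simp: disjnt_def)
    then show ?thesis using \<open>openin T V\<close> by auto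
  qed
  moreover have "U \<subseteq> Op" using calculation by (auto simp: disjnt_def)
  ultimately show ?thesis by blast
qed


lemma profinite_open_subgroup:
  fixes G (structure)
  assumes pg: "profinite_group G T" and op: "openin T Op" and one: "\<one> \<in> Op"
  shows "\<exists>V. subgroup V G \<and> openin T V \<and> V \<subseteq> Op"
proof -
  have tg: "topological_group G T" using pg by (simp add: profinite_group_def)
  interpret group G using tg by (simp add: topological_group_def)
  have top: "topspace T = carrier G" using tg by (simp add: topological_group_def)
  have cs: "compact_space T" using pg by (simp add: profinite_group_def)
  obtain W where W: "openin T W" "closedin T W" "\<one> \<in> W" "W \<subseteq> Op"
    using profinite_clopen[OF pg op one] by blast
  have Wc: "W \<subseteq> carrier G" using W(1) openin_subset top by blast
  have mc: "continuous_map (prod_topology T T) T (\<lambda>(x, y). x \<otimes> y)"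
    using tg by (simp add: topological_group_def)
  have po: "openin (prod_topology T T) {z \<in> topspace (prod_topology T T). (\<lambda>(x, y). x \<otimes> y) z \<in> W}"
    by (rule openin_continuous_map_preimage[OF mc W(1)])
  have "\<forall>w\<in>W. \<exists>A B. openin T A \<and> openin T B \<and> w \<in> A \<and> \<one> \<in> B \<and>
          A \<times> B \<subseteq> {z \<in> topspace (prod_topology T T). (\<lambda>(x, y). x \<otimes> y) z \<in> W}"
  proof
    fix w assume "w \<in> W"
    then have "(w, \<one>) \<in> {z \<in> topspace (prod_topology T T). (\<lambda>(x, y). x \<otimes> y) z \<in> W}"
      using Wc top by auto
    then show "\<exists>A B. openin T A \<and> openin T B \<and> w \<in> A \<and> \<one> \<in> B \<and>
          A \<times> B \<subseteq> {z \<in> topspace (prod_topology T T). (\<lambda>(x, y). x \<otimes> y) z \<in> W}"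
      using po[unfolded openin_prod_topology_alt, rule_format] by presburger
  qed
  then have "\<exists>A. \<forall>w\<in>W. \<exists>B. openin T (A w) \<and> openin T B \<and> w \<in> A w \<and> \<one> \<in> B \<and>
          A w \<times> B \<subseteq> {z \<in> topspace (prod_topology T T). (\<lambda>(x, y). x \<otimes> y) z \<in> W}"
    by (rule bchoice)
  then obtain A where "\<forall>w\<in>W. \<exists>B. openin T (A w) \<and> openin T B \<and> w \<in> A w \<and> \<one> \<in> B \<and>
          A w \<times> B \<subseteq> {z \<in> topspace (prod_topology T T). (\<lambda>(x, y). x \<otimes> y) z \<in> W}"
    by (rule exE)
  then have "\<exists>B. \<forall>w\<in>W. openin T (A w) \<and> openin T (B w) \<and> w \<in> A w \<and> \<one> \<in> B w \<and>
          A w \<times> B w \<subseteq> {z \<in> topspace (prod_topology T T). (\<lambda>(x, y). x \<otimes> y) z \<in> W}"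
    by (rule bchoice)
  then obtain B where AB': "\<forall>w\<in>W. openin T (A w) \<and> openin T (B w) \<and> w \<in> A w \<and> \<one> \<in> B w \<and>
          A w \<times> B w \<subseteq> {z \<in> topspace (prod_topology T T). (\<lambda>(x, y). x \<otimes> y) z \<in> W}"
    by (rule exE)
  have ABo: "openin T (A w)" "openin T (B w)" "w \<in> A w" "\<one> \<in> B w" if "w \<in> W" for w
    using AB'[rule_format, OF that] by (simp_all only:)
  have ABm: "x \<otimes> b \<in> W" if "w \<in> W" "x \<in> A w" "b \<in> B w" for w x b
  proof -
    have "A w \<times> B w \<subseteq> {z \<in> topspace (prod_topology T T). (\<lambda>(x, y). x \<otimes> y) z \<in> W}"
      using AB'[rule_format, OF that(1)] by (simp only:)
    moreover have "(x, b) \<in> A w \<times> B w" using that by (rule_tac SigmaI)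
    ultimately have "(x, b) \<in> {z \<in> topspace (prod_topology T T). (\<lambda>(x, y). x \<otimes> y) z \<in> W}" by (rule subsetD)
    then show ?thesis by simp
  qed
  have Wk: "compactin T W" using closedin_compact_space[OF cs W(2)] .
  obtain \<F> where F: "finite \<F>" "\<F> \<subseteq> A ` W" "W \<subseteq> \<Union>\<F>"
  proof -
    have c1: "\<And>U. U \<in> A ` W \<Longrightarrow> openin T U" using ABo(1) by blast
    have c2: "W \<subseteq> \<Union> (A ` W)" using ABo(3) by blast
    show ?thesis using compactinD[OF Wk c1 c2] that by blast
  qed
  obtain F where F2: "F \<subseteq> W" "finite F" "\<F> = A ` F"
    using F(1,2) finite_subset_image by metis
  have Fne: "F \<noteq> {}" using F(3) F2(3) W(3) by auto
  define B0 where "B0 = \<Inter> (B ` F)"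
  have B0o: "openin T B0" unfolding B0_def
    using F2 Fne ABo by (intro openin_Inter) auto
  have B0one: "\<one> \<in> B0" unfolding B0_def using F2 ABo by auto
  have B0W: "x \<otimes> b \<in> W" if "x \<in> W" "b \<in> B0" for x b
  proof -
    have "x \<in> \<Union> (A ` F)" using F(3) F2(3) \<open>x \<in> W\<close> by blast
    then obtain w where "w \<in> F" "x \<in> A w" by blast
    then have "b \<in> B w" using that(2) B0_def by auto
    then show ?thesis using ABm \<open>w \<in> F\<close> F2(1) \<open>x \<in> A w\<close> by blast
  qed
  have B0c: "B0 \<subseteq> carrier G" using B0o openin_subset top by blast
  define B1 where "B1 = {b \<in> carrier G. b \<in> B0 \<and> inv b \<in> B0}"
  have B1o: "openin T B1"
  proof -
    have "openin T {x \<in> carrier G. inv x \<in> B0}"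
      by (rule tg_open_pre[OF tg tg_inv_cont[OF tg tg_id_cont] B0o])
    moreover have "B1 = B0 \<inter> {x \<in> carrier G. inv x \<in> B0}" using B0c B1_def by auto
    ultimately show ?thesis using B0o by auto
  qed
  define V where "V = {g \<in> carrier G. \<forall>x\<in>W. x \<otimes> g \<in> W \<and> x \<otimes> inv g \<in> W}"
  have B1V: "B1 \<subseteq> V" using B1_def V_def B0W by auto
  have VW: "V \<subseteq> W" using V_def W(3) by auto
  have sg: "subgroup V G"
  proof (rule subgroupI)
    show "V \<subseteq> carrier G" using V_def by auto
    show "V \<noteq> {}" using B1V B1_def B0one by auto
    fix g assume g: "g \<in> V"
    then show "inv g \<in> V" using V_def by auto
    fix h assume h: "h \<in> V"
    have gc: "g \<in> carrier G" and hc: "h \<in> carrier G" using g h V_def by auto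
    show "g \<otimes> h \<in> V" unfolding V_def
    proof (intro CollectI conjI ballI)
      show "g \<otimes> h \<in> carrier G" using gc hc by simp
      fix x assume x: "x \<in> W"
      then have xc: "x \<in> carrier G" using Wc by auto
      have "x \<otimes> g \<in> W" using g x V_def by auto
      then have "x \<otimes> g \<otimes> h \<in> W" using h V_def by auto
      then show "x \<otimes> (g \<otimes> h) \<in> W" using xc gc hc by (simp add: m_assoc)
      have "x \<otimes> inv h \<in> W" using h x V_def by auto
      then have "x \<otimes> inv h \<otimes> inv g \<in> W" using g V_def by auto
      then show "x \<otimes> inv (g \<otimes> h) \<in> W" using xc gc hc by (simp add: m_assoc inv_mult_group)
    qed
  qed
  have "openin T V"
    unfolding openin_subopen[of T V]
  proof
    fix g assume g: "g \<in> V"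
    then have gc: "g \<in> carrier G" using V_def by auto
    let ?N = "{y \<in> carrier G. inv g \<otimes> y \<in> B1}"
    have "openin T ?N"
      by (rule tg_open_pre[OF tg tg_mult_cont[OF tg tg_const_cont[OF tg] tg_id_cont] B1o]) (use gc in simp)
    moreover have "g \<in> ?N" using gc B1_def B0one by simp
    moreover have "?N \<subseteq> V"
    proof
      fix y assume y: "y \<in> ?N"
      then have "g \<otimes> (inv g \<otimes> y) \<in> V" using B1V g subgroup.m_closed[OF sg] by auto
      then show "y \<in> V" using y gc by (simp add: m_assoc[symmetric])
    qed
    ultimately show "\<exists>T'. openin T T' \<and> g \<in> T' \<and> T' \<subseteq> V" by blast
  qed
  then show ?thesis using sg VW W(4) by blast
qed


lemma profinite_open_normal:
  fixes G (structure)
  assumes pg: "profinite_group G T" and sg: "subgroup V G" and op: "openin T V"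
  shows "\<exists>N. subgroup N G \<and> (\<forall>g\<in>carrier G. \<forall>n\<in>N. g \<otimes> n \<otimes> inv g \<in> N) \<and> openin T N \<and> N \<subseteq> V"
proof -
  have tg: "topological_group G T" using pg by (simp add: profinite_group_def)
  interpret group G using tg by (simp add: topological_group_def)
  interpret V: subgroup V G by (rule sg)
  have top: "topspace T = carrier G" using tg by (simp add: topological_group_def)
  have cs: "compact_space T" using pg by (simp add: profinite_group_def)
  define C where "C g = {y \<in> carrier G. g \<otimes> y \<otimes> inv g \<in> V}" for g
  define R where "R a = {y \<in> carrier G. y \<otimes> inv a \<in> V}" for a
  have Co: "openin T (C g)" if "g \<in> carrier G" for g
    unfolding C_def
    by (rule tg_open_pre[OF tg tg_mult_cont[OF tg tg_mult_cont[OF tg tg_const_cont[OF tg that] tg_id_cont] tg_const_cont[OF tg]] op])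
       (use that in simp)
  have Ro: "openin T (R a)" if "a \<in> carrier G" for a
    unfolding R_def
    by (rule tg_open_pre[OF tg tg_mult_cont[OF tg tg_id_cont tg_const_cont[OF tg]] op])
       (use that in simp)
  have Rin: "g \<in> R g" if "g \<in> carrier G" for g using that R_def by simp
  have c1: "\<And>U. U \<in> R ` carrier G \<Longrightarrow> openin T U" using Ro by blast
  have c2: "topspace T \<subseteq> \<Union> (R ` carrier G)" using Rin top by blast
  obtain \<F> where F: "finite \<F>" "\<F> \<subseteq> R ` carrier G" "topspace T \<subseteq> \<Union>\<F>"
    using compactinD[OF cs[unfolded compact_space_def] c1 c2] by blast
  obtain F where F2: "F \<subseteq> carrier G" "finite F" "\<F> = R ` F"
    using F(1,2) finite_subset_image by metis
  have Fne: "F \<noteq> {}" using F(3) F2(3) top by auto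
  have CR: "C g = C a" if g: "g \<in> carrier G" and a: "a \<in> carrier G" and ga: "g \<in> R a" for g a
  proof -
    define v where "v = g \<otimes> inv a"
    have vV: "v \<in> V" using ga R_def v_def by simp
    have vc: "v \<in> carrier G" using vV by auto
    have eq: "g \<otimes> y \<otimes> inv g = v \<otimes> (a \<otimes> y \<otimes> inv a) \<otimes> inv v" if y: "y \<in> carrier G" for y
      using g a y by (simp add: v_def m_assoc inv_mult_group)
    show ?thesis
    proof (intro Set.set_eqI iffI)
      fix y assume "y \<in> C g"
      then have y: "y \<in> carrier G" and "g \<otimes> y \<otimes> inv g \<in> V" using C_def by auto
      then have "inv v \<otimes> (g \<otimes> y \<otimes> inv g) \<otimes> v \<in> V" using vV by simp
      also have "inv v \<otimes> (g \<otimes> y \<otimes> inv g) \<otimes> v = a \<otimes> y \<otimes> inv a"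
        using eq[OF y] vc y a by (simp add: m_assoc)
      finally show "y \<in> C a" using y C_def by simp
    next
      fix y assume "y \<in> C a"
      then have y: "y \<in> carrier G" and "a \<otimes> y \<otimes> inv a \<in> V" using C_def by auto
      then have "v \<otimes> (a \<otimes> y \<otimes> inv a) \<otimes> inv v \<in> V" using vV by simp
      then show "y \<in> C g" using eq[OF y] y C_def by simp
    qed
  qed
  define N where "N = {y \<in> carrier G. \<forall>g\<in>carrier G. g \<otimes> y \<otimes> inv g \<in> V}"
  have NI: "N = \<Inter> (C ` F)"
  proof (intro Set.set_eqI iffI)
    fix y assume "y \<in> N" then show "y \<in> \<Inter> (C ` F)" using N_def C_def F2(1) by auto
  next
    fix y assume y: "y \<in> \<Inter> (C ` F)"
    obtain a where a: "a \<in> F" using Fne by blast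
    have yc: "y \<in> carrier G" using y a C_def by auto
    have "g \<otimes> y \<otimes> inv g \<in> V" if g: "g \<in> carrier G" for g
    proof -
      have "g \<in> \<Union> (R ` F)" using F(3) F2(3) top g by blast
      then obtain b where b: "b \<in> F" "g \<in> R b" by blast
      then have "C g = C b" using CR g F2(1) by blast
      moreover have "y \<in> C b" using y b by blast
      ultimately have "y \<in> C g" by simp
      then show ?thesis unfolding C_def by blast
    qed
    then show "y \<in> N" using yc N_def by simp
  qed
  have No: "openin T N" unfolding NI using F2 Fne Co by (intro openin_Inter) auto
  have Nsg: "subgroup N G"
  proof (rule subgroupI)
    show "N \<subseteq> carrier G" using N_def by auto
    show "N \<noteq> {}" using N_def by auto
    fix y assume y: "y \<in> N"
    then have yc: "y \<in> carrier G" using N_def by auto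
    have "g \<otimes> inv y \<otimes> inv g \<in> V" if g: "g \<in> carrier G" for g
    proof -
      have "inv (g \<otimes> y \<otimes> inv g) \<in> V" using y g N_def by simp
      then show ?thesis using g yc by (simp add: inv_mult_group m_assoc)
    qed
    then show "inv y \<in> N" using yc N_def by simp
    fix z assume z: "z \<in> N"
    then have zc: "z \<in> carrier G" using N_def by auto
    have "g \<otimes> (y \<otimes> z) \<otimes> inv g \<in> V" if g: "g \<in> carrier G" for g
    proof -
      have "(g \<otimes> y \<otimes> inv g) \<otimes> (g \<otimes> z \<otimes> inv g) \<in> V" using y z g N_def by simp
      then show ?thesis using g yc zc by (simp add: m_assoc)
    qed
    then show "y \<otimes> z \<in> N" using yc zc N_def by simp
  qed
  have Nn: "\<forall>g\<in>carrier G. \<forall>n\<in>N. g \<otimes> n \<otimes> inv g \<in> N"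
  proof (intro ballI)
    fix g n assume g: "g \<in> carrier G" and n: "n \<in> N"
    then have nc: "n \<in> carrier G" using N_def by auto
    have "h \<otimes> (g \<otimes> n \<otimes> inv g) \<otimes> inv h \<in> V" if h: "h \<in> carrier G" for h
    proof -
      have "(h \<otimes> g) \<otimes> n \<otimes> inv (h \<otimes> g) \<in> V" using n g h N_def by simp
      then show ?thesis using g h nc by (simp add: m_assoc inv_mult_group)
    qed
    then show "g \<otimes> n \<otimes> inv g \<in> N" using g nc N_def by simp
  qed
  have "N \<subseteq> V"
  proof
    fix y assume "y \<in> N"
    then have "y \<in> carrier G" "\<forall>g\<in>carrier G. g \<otimes> y \<otimes> inv g \<in> V" using N_def by auto
    then have "\<one> \<otimes> y \<otimes> inv \<one> \<in> V" "y \<in> carrier G" using one_closed by blast+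
    then show "y \<in> V" by simp
  qed
  then show ?thesis using Nsg Nn No by blast
qed


lemma extend_hom:
  fixes G (structure) and B :: "'b monoid"
  assumes pg: "profinite_group G T" and sH: "subgroup H G"
    and hphi: "\<phi> \<in> hom (G\<lparr>carrier := H\<rparr>) B"
    and cphi: "continuous_map (subtopology T H) (discrete_topology (carrier B)) \<phi>"
  shows "\<exists>U \<phi>'. subgroup U G \<and> openin T U \<and> H \<subseteq> U \<and> \<phi>' \<in> hom (G\<lparr>carrier := U\<rparr>) B \<and>
     continuous_map (subtopology T U) (discrete_topology (carrier B)) \<phi>' \<and> (\<forall>h\<in>H. \<phi>' h = \<phi> h)"
proof -
  have tg: "topological_group G T" using pg by (simp add: profinite_group_def)
  interpret group G using tg by (simp add: topological_group_def)
  interpret H: subgroup H G by (rule sH)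
  have top: "topspace T = carrier G" using tg by (simp add: topological_group_def)
  have phim: "\<phi> (x \<otimes> y) = \<phi> x \<otimes>\<^bsub>B\<^esub> \<phi> y" if "x \<in> H" "y \<in> H" for x y
    using hom_mult[OF hphi, of x y] that by simp
  have phic: "\<phi> x \<in> carrier B" if "x \<in> H" for x
    using hphi that by (auto simp: hom_def)
  define K where "K = {h \<in> H. \<phi> h = \<phi> \<one>}"
  have "openin (subtopology T H) {x \<in> topspace (subtopology T H). \<phi> x \<in> {\<phi> \<one>}}"
    by (rule openin_continuous_map_preimage[OF cphi]) (simp add: phic)
  moreover have "{x \<in> topspace (subtopology T H). \<phi> x \<in> {\<phi> \<one>}} = K"
    using top H.subset K_def by auto
  ultimately have "openin (subtopology T H) K" by simp
  then obtain Op where Op: "openin T Op" "K = Op \<inter> H" unfolding openin_subtopology by blast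
  have "\<one> \<in> K" using K_def by simp
  then have "\<one> \<in> Op" using Op by blast
  then obtain V where V: "subgroup V G" "openin T V" "V \<subseteq> Op"
    using profinite_open_subgroup[OF pg Op(1)] by blast
  obtain N where N: "subgroup N G" "\<forall>g\<in>carrier G. \<forall>n\<in>N. g \<otimes> n \<otimes> inv g \<in> N" "openin T N" "N \<subseteq> V"
    using profinite_open_normal[OF pg V(1,2)] by blast
  interpret N: subgroup N G by (rule N(1))
  have NH: "N \<inter> H \<subseteq> K" using N(4) V(3) Op(2) by blast
  have conj: "g \<otimes> n \<otimes> inv g \<in> N" if "g \<in> carrier G" "n \<in> N" for g n using N(2) that by blast
  define U where "U = {h \<otimes> m | h m. h \<in> H \<and> m \<in> N}"
  have Uc: "U \<subseteq> carrier G" using U_def by auto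
  have HU: "H \<subseteq> U"
  proof
    fix h assume "h \<in> H" then have "h = h \<otimes> \<one> \<and> h \<in> H \<and> \<one> \<in> N" by simp
    then show "h \<in> U" unfolding U_def by blast
  qed
  have NU: "N \<subseteq> U"
  proof
    fix h assume "h \<in> N" then have "h = \<one> \<otimes> h \<and> \<one> \<in> H \<and> h \<in> N" by simp
    then show "h \<in> U" unfolding U_def by blast
  qed
  have Ushift: "(h1 \<otimes> m1) \<otimes> (h2 \<otimes> m2) = (h1 \<otimes> h2) \<otimes> ((inv h2 \<otimes> m1 \<otimes> inv (inv h2)) \<otimes> m2)"
    if "h1 \<in> carrier G" "m1 \<in> carrier G" "h2 \<in> carrier G" "m2 \<in> carrier G" for h1 m1 h2 m2
    using that by (simp add: m_assoc)
  have Umult: "x \<otimes> y \<in> U" if xU: "x \<in> U" and yU: "y \<in> U" for x y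
  proof -
    obtain h1 m1 where 1: "x = h1 \<otimes> m1" "h1 \<in> H" "m1 \<in> N" using xU U_def by blast
    obtain h2 m2 where 2: "y = h2 \<otimes> m2" "h2 \<in> H" "m2 \<in> N" using yU U_def by blast
    have "inv h2 \<otimes> m1 \<otimes> inv (inv h2) \<in> N" using conj[of "inv h2" m1] 1 2 by simp
    then have "(inv h2 \<otimes> m1 \<otimes> inv (inv h2)) \<otimes> m2 \<in> N" using 2 by simp
    moreover have "h1 \<otimes> h2 \<in> H" using 1 2 by simp
    moreover have "x \<otimes> y = (h1 \<otimes> h2) \<otimes> ((inv h2 \<otimes> m1 \<otimes> inv (inv h2)) \<otimes> m2)"
      unfolding 1(1) 2(1) by (rule Ushift) (use 1 2 in auto)
    ultimately show ?thesis unfolding U_def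
      by (intro CollectI exI[of _ "h1 \<otimes> h2"] exI[of _ "(inv h2 \<otimes> m1 \<otimes> inv (inv h2)) \<otimes> m2"] conjI)
  qed
  have Uinv: "inv x \<in> U" if xU: "x \<in> U" for x
  proof -
    obtain h m where 1: "x = h \<otimes> m" "h \<in> H" "m \<in> N" using xU U_def by blast
    have hc: "h \<in> carrier G" and mc: "m \<in> carrier G" using 1 by auto
    have "inv x = inv h \<otimes> (h \<otimes> inv m \<otimes> inv h)"
      using 1 hc mc by (simp add: inv_mult_group m_assoc)
    moreover have "h \<otimes> inv m \<otimes> inv h \<in> N" using conj hc 1 by simp
    moreover have "inv h \<in> H" using 1 by simp
    ultimately show ?thesis unfolding U_def
      by (intro CollectI exI[of _ "inv h"] exI[of _ "h \<otimes> inv m \<otimes> inv h"] conjI)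
  qed
  have sU: "subgroup U G"
  proof (rule subgroupI)
    show "U \<subseteq> carrier G" by (rule Uc)
    have "\<one> \<in> U" by (rule subsetD[OF HU H.one_closed])
    then show "U \<noteq> {}" by blast
  qed (use Umult Uinv in auto)
  have nbh: "openin T {y \<in> carrier G. inv x \<otimes> y \<in> N}" if "x \<in> carrier G" for x
    by (rule tg_open_pre[OF tg tg_mult_cont[OF tg tg_const_cont[OF tg] tg_id_cont] N(3)]) (use that in simp)
  have oU: "openin T U"
    unfolding openin_subopen[of T U]
  proof
    fix x assume x: "x \<in> U"
    then have xc: "x \<in> carrier G" using Uc by auto
    have "{y \<in> carrier G. inv x \<otimes> y \<in> N} \<subseteq> U"
    proof
      fix y assume y: "y \<in> {y \<in> carrier G. inv x \<otimes> y \<in> N}"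
      then have "x \<otimes> (inv x \<otimes> y) \<in> U" using Umult x NU by auto
      then show "y \<in> U" using y xc by simp
    qed
    then show "\<exists>T'. openin T T' \<and> x \<in> T' \<and> T' \<subseteq> U" using nbh[OF xc] xc by auto
  qed
  define \<phi>' where "\<phi>' u = \<phi> (SOME h. h \<in> H \<and> (\<exists>m\<in>N. u = h \<otimes> m))" for u
  have key: "\<phi>' (h \<otimes> m) = \<phi> h" if h: "h \<in> H" and m: "m \<in> N" for h m
  proof -
    define h' where "h' = (SOME h'. h' \<in> H \<and> (\<exists>m'\<in>N. h \<otimes> m = h' \<otimes> m'))"
    have "h' \<in> H \<and> (\<exists>m'\<in>N. h \<otimes> m = h' \<otimes> m')"
      unfolding h'_def by (rule someI[of _ h]) (use h m in blast)
    then obtain m' where h': "h' \<in> H" "m' \<in> N" "h \<otimes> m = h' \<otimes> m'" by blast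
    have hc: "h \<in> carrier G" "m \<in> carrier G" "h' \<in> carrier G" "m' \<in> carrier G" using h m h' by auto
    have "inv h' \<otimes> h = m' \<otimes> inv m"
    proof -
      have "inv h' \<otimes> (h \<otimes> m) \<otimes> inv m = inv h' \<otimes> (h' \<otimes> m') \<otimes> inv m" using h'(3) by simp
      then show ?thesis using hc by (simp add: m_assoc)
    qed
    moreover have "m' \<otimes> inv m \<in> N" using h' m by simp
    moreover have "inv h' \<otimes> h \<in> H" using h' h by simp
    ultimately have "inv h' \<otimes> h \<in> K" using NH by auto
    then have e1: "\<phi> (inv h' \<otimes> h) = \<phi> \<one>" using K_def by simp
    have "\<phi> h = \<phi> (h' \<otimes> (inv h' \<otimes> h))" using hc by simp
    also have "\<dots> = \<phi> h' \<otimes>\<^bsub>B\<^esub> \<phi> \<one>" using phim[of h' "inv h' \<otimes> h"] e1 h' h by simp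
    also have "\<dots> = \<phi> (h' \<otimes> \<one>)" using phim[of h' \<one>] h' by simp
    also have "\<dots> = \<phi> h'" using hc by simp
    finally show ?thesis unfolding \<phi>'_def h'_def by simp
  qed
  have keyH: "\<phi>' h = \<phi> h" if "h \<in> H" for h
    using key[OF that N.one_closed] that by simp
  have hom': "\<phi>' \<in> hom (G\<lparr>carrier := U\<rparr>) B"
  proof (rule homI)
    fix x assume "x \<in> carrier (G\<lparr>carrier := U\<rparr>)"
    then obtain h m where 1: "x = h \<otimes> m" "h \<in> H" "m \<in> N" using U_def by auto
    then show "\<phi>' x \<in> carrier B" using key phic by simp
  next
    fix x y assume "x \<in> carrier (G\<lparr>carrier := U\<rparr>)" "y \<in> carrier (G\<lparr>carrier := U\<rparr>)"
    then obtain h1 m1 h2 m2 where 1: "x = h1 \<otimes> m1" "h1 \<in> H" "m1 \<in> N"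
        and 2: "y = h2 \<otimes> m2" "h2 \<in> H" "m2 \<in> N" using U_def by auto
    have "inv h2 \<otimes> m1 \<otimes> inv (inv h2) \<in> N" using conj[of "inv h2" m1] 1 2 by simp
    then have mN: "(inv h2 \<otimes> m1 \<otimes> inv (inv h2)) \<otimes> m2 \<in> N" using 2 by simp
    have "x \<otimes> y = (h1 \<otimes> h2) \<otimes> ((inv h2 \<otimes> m1 \<otimes> inv (inv h2)) \<otimes> m2)"
      unfolding 1(1) 2(1) by (rule Ushift) (use 1 2 in auto)
    then have "\<phi>' (x \<otimes> y) = \<phi> (h1 \<otimes> h2)" using key mN 1 2 by simp
    also have "\<dots> = \<phi>' x \<otimes>\<^bsub>B\<^esub> \<phi>' y" using phim 1 2 key by simp
    finally show "\<phi>' (x \<otimes>\<^bsub>G\<lparr>carrier := U\<rparr>\<^esub> y) = \<phi>' x \<otimes>\<^bsub>B\<^esub> \<phi>' y" by simp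
  qed
  have cont': "continuous_map (subtopology T U) (discrete_topology (carrier B)) \<phi>'"
    unfolding continuous_map_def
  proof (intro conjI allI impI)
    show "\<phi>' \<in> topspace (subtopology T U) \<rightarrow> topspace (discrete_topology (carrier B))"
      using hom' by (auto simp: hom_def)
    fix S assume "openin (discrete_topology (carrier B)) S"
    let ?P = "{x \<in> topspace (subtopology T U). \<phi>' x \<in> S}"
    have "openin T ?P"
      unfolding openin_subopen[of T ?P]
    proof
      fix x assume x: "x \<in> ?P"
      then have xU: "x \<in> U" and xS: "\<phi>' x \<in> S" by auto
      then obtain h m where 1: "x = h \<otimes> m" "h \<in> H" "m \<in> N" using U_def by auto
      have xc: "x \<in> carrier G" using xU Uc by auto
      have "{y \<in> carrier G. inv x \<otimes> y \<in> N} \<subseteq> ?P"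
      proof
        fix y assume y: "y \<in> {y \<in> carrier G. inv x \<otimes> y \<in> N}"
        have yc: "y \<in> carrier G" using y by simp
        have hmc: "h \<in> carrier G" "m \<in> carrier G" using 1 by auto
        have "h \<otimes> (m \<otimes> (inv x \<otimes> y)) = (h \<otimes> m) \<otimes> (inv x \<otimes> y)"
          using hmc xc yc by (simp add: m_assoc)
        also have "\<dots> = x \<otimes> (inv x \<otimes> y)" using 1(1) by simp
        also have "\<dots> = y" using xc yc by simp
        finally have yeq: "y = h \<otimes> (m \<otimes> (inv x \<otimes> y))" by simp
        have mN: "m \<otimes> (inv x \<otimes> y) \<in> N" using 1 y by simp
        have "\<phi>' y = \<phi> h" by (subst yeq) (rule key[OF 1(2) mN])
        moreover have "\<phi>' x = \<phi> h" unfolding 1(1) by (rule key[OF 1(2,3)])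
        moreover have "h \<otimes> (m \<otimes> (inv x \<otimes> y)) \<in> U"
          by (rule Umult[OF subsetD[OF HU 1(2)] subsetD[OF NU mN]])
        ultimately have "y \<in> U" "\<phi>' y \<in> S" using yeq xS by simp_all
        moreover have "y \<in> topspace T" using y top by simp
        ultimately show "y \<in> ?P" by simp
      qed
      then show "\<exists>T'. openin T T' \<and> x \<in> T' \<and> T' \<subseteq> ?P" using nbh[OF xc] xc by auto
    qed
    moreover have "?P \<subseteq> U" by auto
    ultimately show "openin (subtopology T U) ?P" using openin_open_subtopology[OF oU] by blast
  qed
  show ?thesis using sU oU HU hom' cont' keyH by blast
qed


theorem mainTheorem9:
  fixes \<Gamma> :: "'a monoid" and T :: "'a topology" and p n :: nat
  assumes "Factorial_Ring.prime p" and "n \<ge> 2"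
    and "profinite_group \<Gamma> T"
    and "\<forall>U. subgroup U \<Gamma> \<and> openin T U \<longrightarrow>
           massey_vanishing p n (\<Gamma>\<lparr>carrier := U\<rparr>) (subtopology T U)"
  shows "\<forall>H. subgroup H \<Gamma> \<and> closedin T H \<longrightarrow>
           massey_vanishing p n (\<Gamma>\<lparr>carrier := H\<rparr>) (subtopology T H)"
proof (intro allI impI)
  fix H assume "subgroup H \<Gamma> \<and> closedin T H"
  then have sH: "subgroup H \<Gamma>" by simp
  show "massey_vanishing p n (\<Gamma>\<lparr>carrier := H\<rparr>) (subtopology T H)"
    unfolding massey_vanishing_def
  proof (intro allI impI)
    fix \<phi> assume a: "\<phi> \<in> hom (\<Gamma>\<lparr>carrier := H\<rparr>) (unitri_bar p n) \<and>
         continuous_map (subtopology T H) (discrete_topology (carrier (unitri_bar p n))) \<phi>"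
    obtain U \<phi>' where U: "subgroup U \<Gamma>" "openin T U" "H \<subseteq> U"
        "\<phi>' \<in> hom (\<Gamma>\<lparr>carrier := U\<rparr>) (unitri_bar p n)"
        "continuous_map (subtopology T U) (discrete_topology (carrier (unitri_bar p n))) \<phi>'"
        "\<forall>h\<in>H. \<phi>' h = \<phi> h"
      using extend_hom[OF assms(3) sH, of \<phi> "unitri_bar p n"] a by blast
    have mv: "massey_vanishing p n (\<Gamma>\<lparr>carrier := U\<rparr>) (subtopology T U)"
      using assms(4) U(1,2) by simp
    obtain \<psi> where psi: "\<psi> \<in> hom (\<Gamma>\<lparr>carrier := U\<rparr>) (unitri_group p n)"
        "continuous_map (subtopology T U) (discrete_topology (carrier (unitri_group p n))) \<psi>"
        "\<forall>h\<in>U. \<forall>M\<in>\<phi>' h. \<forall>i\<in>{1..n}. M i (Suc i) = \<psi> h i (Suc i)"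
    proof -
      have "\<forall>\<phi>. \<phi> \<in> hom (\<Gamma>\<lparr>carrier := U\<rparr>) (unitri_bar p n) \<and>
         continuous_map (subtopology T U) (discrete_topology (carrier (unitri_bar p n))) \<phi> \<longrightarrow>
      (\<exists>\<psi>. \<psi> \<in> hom (\<Gamma>\<lparr>carrier := U\<rparr>) (unitri_group p n) \<and>
         continuous_map (subtopology T U) (discrete_topology (carrier (unitri_group p n))) \<psi> \<and>
         (\<forall>h\<in>carrier (\<Gamma>\<lparr>carrier := U\<rparr>). \<forall>M\<in>\<phi> h. \<forall>i\<in>{1..n}. M i (Suc i) = \<psi> h i (Suc i)))"
        using mv unfolding massey_vanishing_def .
      from this[rule_format, OF conjI[OF U(4) U(5)]]
      obtain \<psi> where "\<psi> \<in> hom (\<Gamma>\<lparr>carrier := U\<rparr>) (unitri_group p n)"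
        "continuous_map (subtopology T U) (discrete_topology (carrier (unitri_group p n))) \<psi>"
        "\<forall>h\<in>carrier (\<Gamma>\<lparr>carrier := U\<rparr>). \<forall>M\<in>\<phi>' h. \<forall>i\<in>{1..n}. M i (Suc i) = \<psi> h i (Suc i)"
        by (elim exE conjE)
      then show ?thesis using that by simp
    qed
    have "\<psi> \<in> hom (\<Gamma>\<lparr>carrier := H\<rparr>) (unitri_group p n)"
    proof (rule homI)
      have h1: "\<psi> \<in> U \<rightarrow> carrier (unitri_group p n)"
        and h2: "\<forall>x\<in>U. \<forall>y\<in>U. \<psi> (x \<otimes>\<^bsub>\<Gamma>\<^esub> y) = \<psi> x \<otimes>\<^bsub>unitri_group p n\<^esub> \<psi> y"
        using psi(1) by (auto simp: hom_def)
      fix x assume "x \<in> carrier (\<Gamma>\<lparr>carrier := H\<rparr>)"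
      then have "x \<in> U" using U(3) by auto
      then show "\<psi> x \<in> carrier (unitri_group p n)" using h1 by blast
      fix y assume "y \<in> carrier (\<Gamma>\<lparr>carrier := H\<rparr>)"
      then have "y \<in> U" using U(3) by auto
      then show "\<psi> (x \<otimes>\<^bsub>\<Gamma>\<lparr>carrier := H\<rparr>\<^esub> y) = \<psi> x \<otimes>\<^bsub>unitri_group p n\<^esub> \<psi> y"
        using h2 \<open>x \<in> U\<close> by simp
    qed
    moreover have "continuous_map (subtopology T H) (discrete_topology (carrier (unitri_group p n))) \<psi>"
      by (rule continuous_map_from_subtopology_mono[OF psi(2) U(3)])
    moreover have "\<forall>h\<in>carrier (\<Gamma>\<lparr>carrier := H\<rparr>). \<forall>M\<in>\<phi> h. \<forall>i\<in>{1..n}. M i (Suc i) = \<psi> h i (Suc i)"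
      using psi(3) U(3,6) by auto
    ultimately show "\<exists>\<psi>. \<psi> \<in> hom (\<Gamma>\<lparr>carrier := H\<rparr>) (unitri_group p n) \<and>
         continuous_map (subtopology T H) (discrete_topology (carrier (unitri_group p n))) \<psi> \<and>
         (\<forall>h\<in>carrier (\<Gamma>\<lparr>carrier := H\<rparr>). \<forall>M\<in>\<phi> h. \<forall>i\<in>{1..n}. M i (Suc i) = \<psi> h i (Suc i))"
      by blast
  qed
qed

end
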